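(* Let $(X,\|\cdot\|)$ be a Banach space. If every ordered pair $(A,B)$ of nonempty subsets of $X$ with $A$ convex has the $UC$ property, then $(X,\|\cdot\|)$ is a uniformly convex Banach space.
   Context: $\mathrm{dist}(A,B)=\inf\{\|a-b\|:a\in A,b\in B\}$. The ordered pair $(A,B)$ has the $UC$ property if for all sequences $\{x_n\},\{z_n\}\subset A$, $\{y_n\}\subset B$ with $\lim_n\|x_n-y_n\|=\lim_n\|z_n-y_n\|=\mathrm{dist}(A,B)$ one has $\lim_n\|x_n-z_n\|=0$. $X$ is uniformly convex if for every $\varepsilon\in(0,2]$, $\inf\{1-\|\frac{x+y}{2}\|: \|x\|,\|y\|\le1,\ \|x-y\|\ge\varepsilon\}>0$. *)

theory Defs
  imports "HOL-Analysis.Analysis"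
begin

definition UC_property :: "'a::real_normed_vector set \<Rightarrow> 'a set \<Rightarrow> bool" where
  "UC_property A B \<longleftrightarrow>
     (\<forall>x z y :: nat \<Rightarrow> 'a.
        (\<forall>n. x n \<in> A) \<longrightarrow> (\<forall>n. z n \<in> A) \<longrightarrow> (\<forall>n. y n \<in> B) \<longrightarrow>
        (\<lambda>n. norm (x n - y n)) \<longlonglongrightarrow> setdist A B \<longrightarrow>
        (\<lambda>n. norm (z n - y n)) \<longlonglongrightarrow> setdist A B \<longrightarrow>
        (\<lambda>n. norm (x n - z n)) \<longlonglongrightarrow> 0)"

text \<open>Uniform convexity: for each eps in (0,2] the infimum of 1 - norm ((x+y)/2) over
  x, y in the closed unit ball with norm (x - y) >= eps is positive (inf of empty set = +infinity),
  written out as the existence of a positive lower bound.\<close>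

definition uniformly_convex_space :: "'a::real_normed_vector itself \<Rightarrow> bool" where
  "uniformly_convex_space TYPE('a) \<longleftrightarrow>
     (\<forall>\<epsilon>::real. 0 < \<epsilon> \<and> \<epsilon> \<le> 2 \<longrightarrow>
        (\<exists>\<delta>>0. \<forall>x y :: 'a. norm x \<le> 1 \<longrightarrow> norm y \<le> 1 \<longrightarrow> norm (x - y) \<ge> \<epsilon> \<longrightarrow>
              1 - norm ((1/2) *\<^sub>R (x + y)) \<ge> \<delta>))"

end

theory Submission
  imports Defs
begin

theorem corollary45:
  assumes "\<forall>A B :: 'a::banach set. A \<noteq> {} \<and> B \<noteq> {} \<and> convex A \<longrightarrow> UC_property A B"
  shows "uniformly_convex_space TYPE('a)"
proof (rule ccontr)
  assume "\<not> uniformly_convex_space TYPE('a)"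
  then obtain e :: real where e: "0 < e" and
    H: "\<And>d. d > 0 \<Longrightarrow> \<exists>x y :: 'a. norm x \<le> 1 \<and> norm y \<le> 1 \<and> norm (x - y) \<ge> e \<and>
              1 - norm ((1/2) *\<^sub>R (x + y)) < d"
    unfolding uniformly_convex_space_def by (auto simp: not_le)
  have "\<forall>n::nat. \<exists>x y :: 'a. norm x \<le> 1 \<and> norm y \<le> 1 \<and> norm (x - y) \<ge> e \<and>
              1 - norm ((1/2) *\<^sub>R (x + y)) < 1 / (real n + 2)"
    using H by auto
  then obtain a b :: "nat \<Rightarrow> 'a" where ab: "\<And>n. norm (a n) \<le> 1" "\<And>n. norm (b n) \<le> 1"
    "\<And>n. norm (a n - b n) \<ge> e" "\<And>n. 1 - norm ((1/2) *\<^sub>R (a n + b n)) < 1 / (real n + 2)"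
    by metis
  define s where "s n = a n + b n" for n
  have sn: "2 - norm (s n) < 2 / (real n + 2)" for n
  proof -
    have "norm ((1/2) *\<^sub>R (a n + b n)) = norm (s n) / 2" by (simp add: s_def)
    hence "1 - norm (s n) / 2 < 1 / (real n + 2)" using ab(4)[of n] by simp
    hence "2 * (1 - norm (s n) / 2) < 2 * (1 / (real n + 2))" by (rule mult_strict_left_mono) auto
    thus ?thesis by (simp add: algebra_simps)
  qed
  have s2: "norm (s n) \<le> 2" for n
    unfolding s_def using ab(1,2)[of n] norm_triangle_ineq[of "a n" "b n"] by linarith
  have s1: "norm (s n) > 1" for n
  proof -
    have "2 / (real n + 2) \<le> 1" by (simp add: field_simps)
    thus ?thesis using sn[of n] by linarith
  qed
  have s0: "s n \<noteq> 0" for n using s1[of n] by auto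
  define t where "t n = (2 / norm (s n)) *\<^sub>R s n" for n
  have nt: "norm (t n) = 2" for n using s1[of n] s0[of n] by (auto simp: t_def)
  have st: "norm (s n - t n) = 2 - norm (s n)" for n
  proof -
    have "s n - t n = (1 - 2 / norm (s n)) *\<^sub>R s n" by (simp add: t_def algebra_simps)
    hence "norm (s n - t n) = \<bar>1 - 2 / norm (s n)\<bar> * norm (s n)" by simp
    also have "\<dots> = (2 / norm (s n) - 1) * norm (s n)"
      using s1[of n] s2[of n] by (simp add: field_simps)
    also have "\<dots> = 2 - norm (s n)" using s1[of n] s0[of n] by (simp add: field_simps)
    finally show ?thesis .
  qed
  define A where "A = cball (0::'a) 1"
  define B where "B = range t"
  have lowA: "norm (x - y) \<ge> 1" if "x \<in> A" "y \<in> B" for x y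
  proof -
    from that obtain n where "y = t n" "norm x \<le> 1" by (auto simp: A_def B_def)
    thus ?thesis using nt[of n] norm_triangle_ineq2[of y x] by (simp add: norm_minus_commute)
  qed
  have bounds: "1 \<le> norm (u n - t n) \<and> norm (u n - t n) \<le> 1 + 2 / (real n + 2)"
    if u: "\<And>n. norm (u n) \<le> 1" "\<And>n. norm (s n - u n) \<le> 1" for u n
  proof
    show "1 \<le> norm (u n - t n)" using lowA[of "u n" "t n"] u by (auto simp: A_def B_def)
    have "norm (u n - t n) \<le> norm (u n - s n) + norm (s n - t n)"
      using norm_triangle_ineq[of "u n - s n" "s n - t n"] by simp
    also have "\<dots> \<le> 1 + 2 / (real n + 2)" using u(2)[of n] st[of n] sn[of n]
      by (simp add: norm_minus_commute)
    finally show "norm (u n - t n) \<le> 1 + 2 / (real n + 2)" .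
  qed
  have lim0: "(\<lambda>n. 1 + 2 / (real n + 2)) \<longlonglongrightarrow> (1::real)"
  proof -
    have "(\<lambda>n. inverse (real (Suc (n + 1)))) \<longlonglongrightarrow> (0::real)"
      using LIMSEQ_ignore_initial_segment[OF LIMSEQ_inverse_real_of_nat, of 1] by simp
    hence "(\<lambda>n. 2 * inverse (real (Suc (n + 1)))) \<longlonglongrightarrow> (2 * 0::real)"
      by (intro tendsto_mult tendsto_const)
    hence "(\<lambda>n. 2 / (real n + 2)) \<longlonglongrightarrow> (0::real)" by (simp add: divide_inverse add.commute)
    thus ?thesis using tendsto_add[of "\<lambda>_. 1" 1 sequentially] by force
  qed
  have limu: "(\<lambda>n. norm (u n - t n)) \<longlonglongrightarrow> 1"
    if u: "\<And>n. norm (u n) \<le> 1" "\<And>n. norm (s n - u n) \<le> 1" for u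
    by (rule real_tendsto_sandwich[OF _ _ tendsto_const lim0]) (use bounds[OF u] in auto)
  have sa: "norm (s n - a n) \<le> 1" for n using ab(2)[of n] by (simp add: s_def)
  have sb: "norm (s n - b n) \<le> 1" for n using ab(1)[of n] by (simp add: s_def)
  have la: "(\<lambda>n. norm (a n - t n)) \<longlonglongrightarrow> 1" using limu[OF ab(1) sa] .
  have lb: "(\<lambda>n. norm (b n - t n)) \<longlonglongrightarrow> 1" using limu[OF ab(2) sb] .
  have sd: "setdist A B = 1"
  proof (rule antisym)
    show "1 \<le> setdist A B"
      by (rule le_setdistI) (auto simp: A_def B_def dist_norm intro: lowA[unfolded A_def B_def])
    have "setdist A B \<le> norm (a n - t n)" for n
      using setdist_le_dist[of "a n" A "t n" B] ab(1)[of n] by (simp add: A_def B_def dist_norm)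
    thus "setdist A B \<le> 1" using la by (meson LIMSEQ_le_const)
  qed
  have "UC_property A B" using assms by (auto simp: A_def B_def)
  hence "(\<lambda>n. norm (a n - b n)) \<longlonglongrightarrow> 0"
  proof -
    have "\<forall>n. a n \<in> A" "\<forall>n. b n \<in> A" "\<forall>n. t n \<in> B"
      using ab(1,2) by (auto simp: A_def B_def)
    thus ?thesis using \<open>UC_property A B\<close> la lb unfolding UC_property_def sd by blast
  qed
  moreover have "\<not> (\<lambda>n. norm (a n - b n)) \<longlonglongrightarrow> 0"
  proof
    assume "(\<lambda>n. norm (a n - b n)) \<longlonglongrightarrow> 0"
    hence "0 \<ge> e" using ab(3) by (meson LIMSEQ_le_const)
    thus False using e by simp
  qed
  ultimately show False by simp
qed

end
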